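(* Let $G$ be a connected edge-stable equimatchable graph with at least $3$ vertices and let $M$ be a maximal matching of $G$. Then (i) $G$ has no perfect matching; and (ii) for every edge $uv\in M$ there exists a vertex $w$ not saturated by $M$ which is adjacent to $u$ or to $v$.
   Context: All graphs are finite and simple. A graph is equimatchable if all its maximal matchings have the same cardinality; an equimatchable graph $G$ is edge-stable if $G\setminus e$ (delete edge $e$, keep vertices) is equimatchable for every $e\in E(G)$. A matching saturates a vertex if the vertex is an endpoint of one of its edges. *)

theory Defs
  imports Main
begin

definition graph :: "'a set \<Rightarrow> 'a set set \<Rightarrow> bool" where
  "graph V E \<longleftrightarrow> finite V \<and> (\<forall>e\<in>E. e \<subseteq> V \<and> card e = 2)"

definition adj :: "'a set set \<Rightarrow> 'a \<Rightarrow> 'a \<Rightarrow> bool" where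
  "adj E u v \<longleftrightarrow> {u, v} \<in> E"

definition connected_graph :: "'a set \<Rightarrow> 'a set set \<Rightarrow> bool" where
  "connected_graph V E \<longleftrightarrow> (\<forall>u\<in>V. \<forall>v\<in>V. (adj E)\<^sup>*\<^sup>* u v)"

definition matching :: "'a set set \<Rightarrow> 'a set set \<Rightarrow> bool" where
  "matching E M \<longleftrightarrow> M \<subseteq> E \<and> (\<forall>e1\<in>M. \<forall>e2\<in>M. e1 \<noteq> e2 \<longrightarrow> e1 \<inter> e2 = {})"

definition maximal_matching :: "'a set set \<Rightarrow> 'a set set \<Rightarrow> bool" where
  "maximal_matching E M \<longleftrightarrow> matching E M \<and>
     (\<forall>M'. matching E M' \<and> M \<subseteq> M' \<longrightarrow> M' = M)"

definition saturates :: "'a set set \<Rightarrow> 'a \<Rightarrow> bool" where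
  "saturates M v \<longleftrightarrow> (\<exists>e\<in>M. v \<in> e)"

definition perfect_matching :: "'a set \<Rightarrow> 'a set set \<Rightarrow> 'a set set \<Rightarrow> bool" where
  "perfect_matching V E M \<longleftrightarrow> matching E M \<and> (\<forall>v\<in>V. saturates M v)"

definition equimatchable :: "'a set set \<Rightarrow> bool" where
  "equimatchable E \<longleftrightarrow>
     (\<forall>M1 M2. maximal_matching E M1 \<and> maximal_matching E M2 \<longrightarrow> card M1 = card M2)"

definition edge_stable :: "'a set set \<Rightarrow> bool" where
  "edge_stable E \<longleftrightarrow> equimatchable E \<and> (\<forall>e\<in>E. equimatchable (E - {e}))"

end

theory Submission
  imports Defs
begin

lemma path_exit:
  assumes "(adj E)\<^sup>*\<^sup>* a b" "a \<in> S" "b \<notin> S"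
  shows "\<exists>x y. x \<in> S \<and> y \<notin> S \<and> adj E x y"
  using assms
proof (induction rule: rtranclp.induct)
  case (rtrancl_refl a) then show ?case by simp
next
  case (rtrancl_into_rtrancl a b c)
  then show ?case by (cases "b \<in> S") auto
qed

lemma extend_maximal:
  assumes "finite E" "matching E N0"
  shows "\<exists>N. N0 \<subseteq> N \<and> maximal_matching E N"
  using assms(2)
proof (induction "card E - card N0" arbitrary: N0 rule: less_induct)
  case less
  show ?case
  proof (cases "maximal_matching E N0")
    case True then show ?thesis by blast
  next
    case False
    then obtain M' where M': "matching E M'" "N0 \<subseteq> M'" "M' \<noteq> N0"
      using less.prems unfolding maximal_matching_def by blast
    have "M' \<subseteq> E" "N0 \<subseteq> E" using M'(1) less.prems unfolding matching_def by auto
    have fM': "finite M'" using \<open>M' \<subseteq> E\<close> assms(1) finite_subset by blast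
    have "N0 \<subset> M'" using M' by blast
    hence "card N0 < card M'" using fM' psubset_card_mono by blast
    have "card M' \<le> card E" using \<open>M' \<subseteq> E\<close> assms(1) card_mono by blast
    hence "card E - card M' < card E - card N0" using \<open>card N0 < card M'\<close> by simp
    from less.hyps[OF this M'(1)] M'(2) show ?thesis by blast
  qed
qed

lemma matching_minus:
  "matching (E - {e}) N \<longleftrightarrow> matching E N \<and> e \<notin> N"
  unfolding matching_def by auto

lemma key:
  assumes g: "graph V E"
    and c: "connected_graph V E"
    and s: "edge_stable E"
    and n: "card V \<ge> 3"
    and m: "maximal_matching E M"
    and uv: "{u, v} \<in> M"
  shows "\<exists>w\<in>V. \<not> saturates M w \<and> (adj E w u \<or> adj E w v)"
proof (rule ccontr)
  assume "\<not> ?thesis"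
  hence H: "\<And>w. w \<in> V \<Longrightarrow> adj E w u \<or> adj E w v \<Longrightarrow> saturates M w" by blast
  define e where "e = {u, v}"
  have mE: "matching E M" using m unfolding maximal_matching_def by blast
  have ME: "M \<subseteq> E" using mE unfolding matching_def by blast
  have eE: "e \<in> E" using uv ME e_def by blast
  have fV: "finite V" using g unfolding graph_def by blast
  have EP: "E \<subseteq> Pow V" using g unfolding graph_def by blast
  have fE: "finite E" using fV EP by (meson finite_Pow_iff finite_subset)
  have fM: "finite M" using fE ME finite_subset by blast
  have ce: "card e = 2" using g eE unfolding graph_def by blast
  have uvne: "u \<noteq> v" using ce e_def by (cases "u = v") auto
  have uvV: "u \<in> V" "v \<in> V" using g eE e_def unfolding graph_def by auto
  have max1: "maximal_matching (E - {e}) (M - {e})"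
    unfolding maximal_matching_def
  proof (intro conjI allI impI)
    show "matching (E - {e}) (M - {e})" using mE unfolding matching_def by auto
  next
    fix M' assume a: "matching (E - {e}) M' \<and> M - {e} \<subseteq> M'"
    hence M'm: "matching E M'" "e \<notin> M'" using matching_minus by blast+
    have disj: "\<And>x y. x \<in> M' \<Longrightarrow> y \<in> M' \<Longrightarrow> x \<noteq> y \<Longrightarrow> x \<inter> y = {}"
      using M'm(1) unfolding matching_def by blast
    show "M' = M - {e}"
    proof (rule ccontr)
      assume "M' \<noteq> M - {e}"
      then obtain gg where gg: "gg \<in> M'" "gg \<notin> M - {e}" using a by blast
      have ggE: "gg \<in> E" "gg \<noteq> e" "gg \<notin> M" using gg M'm unfolding matching_def by auto
      have "\<not> matching E (insert gg M)"
      proof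
        assume "matching E (insert gg M)"
        hence "insert gg M = M" using m unfolding maximal_matching_def by blast
        thus False using ggE by blast
      qed
      then obtain h where h: "h \<in> M" "h \<noteq> gg" "h \<inter> gg \<noteq> {}"
        using mE ggE unfolding matching_def by (auto simp: Int_commute)
      show False
      proof (cases "h = e")
        case False
        hence "h \<in> M'" using a h by blast
        thus False using disj[OF _ gg(1)] h by blast
      next
        case True
        then obtain x where x: "x \<in> {u, v}" "x \<in> gg" using h e_def by blast
        have "card gg = 2" using g ggE unfolding graph_def by blast
        then obtain a b where ab: "gg = {a, b}" "a \<noteq> b" by (meson card_2_iff)
        have "\<exists>z. z \<noteq> x \<and> gg = {x, z}"
        proof (cases "x = a")
          case True then show ?thesis using ab by (intro exI[of _ b]) simp
        next
          case False then have "x = b" using x(2) ab by blast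
          then show ?thesis using ab by (intro exI[of _ a]) (simp add: insert_commute)
        qed
        then obtain z where z: "z \<noteq> x" "gg = {x, z}" by blast
        have zV: "z \<in> V" using g ggE z unfolding graph_def by auto
        have "{z, x} \<in> E" using ggE z by (simp add: insert_commute)
        hence "adj E z u \<or> adj E z v" using x unfolding adj_def by blast
        then obtain h' where h': "h' \<in> M" "z \<in> h'" using H[OF zV] unfolding saturates_def by blast
        show False
        proof (cases "h' = e")
          case True
          hence "gg = e" using z x h' e_def uvne by auto
          thus False using ggE by blast
        next
          case False
          hence "h' \<in> M'" using a h' by blast
          moreover have "h' \<noteq> gg" using h' ggE by blast
          ultimately show False using disj[OF _ gg(1)] h' z by blast
        qed
      qed
    qed
  qed
  obtain w where w: "w \<in> V" "w \<notin> {u, v}"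
  proof -
    have "\<not> V \<subseteq> {u, v}"
    proof
      assume "V \<subseteq> {u, v}"
      hence "card V \<le> card {u, v}" by (intro card_mono) auto
      also have "\<dots> \<le> 2" by (simp add: card_insert_le_m1)
      finally show False using n by simp
    qed
    thus ?thesis using that by blast
  qed
  have "(adj E)\<^sup>*\<^sup>* u w" using c uvV w unfolding connected_graph_def by blast
  then obtain x y where xy: "x \<in> {u, v}" "y \<notin> {u, v}" "adj E x y"
    using path_exit[of E u w "{u,v}"] w by blast
  define f where "f = {x, y}"
  have fEE: "f \<in> E" using xy f_def unfolding adj_def by blast
  have "matching E {f}" using fEE unfolding matching_def by blast
  then obtain N where N: "{f} \<subseteq> N" "maximal_matching E N" using extend_maximal fE by blast
  have fne: "f \<noteq> e" using xy f_def e_def by auto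
  have "e \<notin> N"
  proof
    assume "e \<in> N"
    hence "e \<inter> f = {}" using N fne unfolding maximal_matching_def matching_def by blast
    thus False using xy e_def f_def by auto
  qed
  have max2: "maximal_matching (E - {e}) N"
    using N(2) \<open>e \<notin> N\<close> unfolding maximal_matching_def matching_minus by blast
  have "card N = card M" using s N(2) m unfolding edge_stable_def equimatchable_def by blast
  moreover have "card (M - {e}) = card N" using s eE max1 max2 unfolding edge_stable_def equimatchable_def by blast
  moreover have "card (M - {e}) = card M - 1" using fM uv e_def by simp
  moreover have "card M \<ge> 1" using fM uv by (metis card_0_eq empty_iff less_one not_le)
  ultimately show False by simp
qed

theorem corollary2p2:
  fixes V :: "'a set" and E M :: "'a set set"
  assumes "graph V E"
    and "connected_graph V E"
    and "edge_stable E"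
    and "card V \<ge> 3"
    and "maximal_matching E M"
  shows "(\<not> (\<exists>P. perfect_matching V E P)) \<and>
         (\<forall>u v. {u, v} \<in> M \<longrightarrow>
           (\<exists>w\<in>V. \<not> saturates M w \<and> (adj E w u \<or> adj E w v)))"
proof
  show "\<not> (\<exists>P. perfect_matching V E P)"
  proof
    assume "\<exists>P. perfect_matching V E P"
    then obtain P where P: "matching E P" "\<forall>v\<in>V. saturates P v"
      unfolding perfect_matching_def by blast
    have PE: "P \<subseteq> E" using P unfolding matching_def by blast
    have maxP: "maximal_matching E P"
      unfolding maximal_matching_def
    proof (intro conjI allI impI)
      show "matching E P" by fact
    next
      fix M' assume a: "matching E M' \<and> P \<subseteq> M'"
      show "M' = P"
      proof (rule ccontr)
        assume "M' \<noteq> P"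
        then obtain gg where gg: "gg \<in> M'" "gg \<notin> P" using a by blast
        have "gg \<in> E" using a gg unfolding matching_def by blast
        hence "card gg = 2" "gg \<subseteq> V" using assms(1) unfolding graph_def by auto
        hence "gg \<noteq> {}" by auto
        then obtain z where "z \<in> gg" by blast
        hence "z \<in> V" using \<open>gg \<subseteq> V\<close> by blast
        then obtain h where "h \<in> P" "z \<in> h" using P unfolding saturates_def by blast
        have hM: "h \<in> M'" using a \<open>h \<in> P\<close> by blast
        have hg: "h \<noteq> gg" using gg \<open>h \<in> P\<close> by blast
        have "\<forall>e1\<in>M'. \<forall>e2\<in>M'. e1 \<noteq> e2 \<longrightarrow> e1 \<inter> e2 = {}" using a unfolding matching_def by blast
        hence "h \<inter> gg = {}" using hM hg gg(1) by blast
        thus False using \<open>z \<in> gg\<close> \<open>z \<in> h\<close> by blast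
      qed
    qed
    have "V \<noteq> {}" using assms(4) by auto
    then obtain v0 where "v0 \<in> V" by blast
    then obtain h where h: "h \<in> P" "v0 \<in> h" using P unfolding saturates_def by blast
    have "card h = 2" using h PE assms(1) unfolding graph_def by blast
    then obtain a b where "h = {a, b}" by (meson card_2_iff)
    hence "{a, b} \<in> P" using h by simp
    from key[OF assms(1-4) maxP this] obtain w where "w \<in> V" "\<not> saturates P w" by blast
    thus False using P by blast
  qed
next
  show "\<forall>u v. {u, v} \<in> M \<longrightarrow> (\<exists>w\<in>V. \<not> saturates M w \<and> (adj E w u \<or> adj E w v))"
    using key[OF assms] by blast
qed

end
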